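(* Let $n\ge 1$, $k\ge 2$, $\mathcal{K}$ a set of size $k$, $\epsilon\ge 0$ and $p=e^\epsilon/(k-1+e^\epsilon)$. Then $\mathbf{S}\mathbf{N}\equiv\mathbf{S}^r\mathbf{N}^r$.
   Context: A dataset is $x\in\mathcal{K}^n$; its histogram $h(x)$ is the map $\kappa\mapsto|\{i:x_i=\kappa\}|$; $\mathcal{Z}$ is the set of histograms and $\#z$ the number of datasets with histogram $z$. Channels are row-stochastic matrices; cascading is matrix multiplication. Full $k$-RR channel $\mathbf{N}:\mathcal{K}^n\to\mathcal{K}^n$: $\mathbf{N}_{x,y}=\prod_{i=0}^{n-1}q(y_i\mid x_i)$, $q(b\mid a)=p$ if $b=a$, $(1-p)/(k-1)$ otherwise. Shuffle channel $\mathbf{S}:\mathcal{K}^n\to\mathcal{K}^n$: $\mathbf{S}_{x,y}=1/\#h(x)$ if $h(y)=h(x)$, else $0$. Reduced shuffle $\mathbf{S}^r:\mathcal{K}^n\to\mathcal{Z}$: $\mathbf{S}^r_{x,z}=1$ if $h(x)=z$, else $0$. Reduced $k$-RR $\mathbf{N}^r:\mathcal{Z}\to\mathcal{Z}$: $\mathbf{N}^r_{z',z}=\frac{1}{\#z'}\sum_{x':h(x')=z'}\sum_{y:h(y)=z}\mathbf{N}_{x',y}$. For prior $\pi$ and gain function $g:\mathcal{W}\times\mathcal{X}\to[0,\infty)$ ($\mathcal{W}$ finite nonempty), $V_g[\pi\triangleright\mathbf{C}]=\sum_{y}\max_{w}\sum_{x}\pi_x\mathbf{C}_{x,y}g(w,x)$;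 channels with the same input set are equivalent ($\equiv$) iff they have equal posterior vulnerability for all priors and gain functions. *)

theory Defs
  imports Complex_Main
begin

text \<open>Alphabet \<K>: a finite type 'k with k = CARD('k). Datasets: lists of length n.
Channels: real-valued matrices C :: 'a \<Rightarrow> 'b \<Rightarrow> real, with explicit input/output sets.\<close>

definition datasets :: "nat \<Rightarrow> ('k::finite) list set" where
  "datasets n = {xs. length xs = n}"

definition hist :: "'k list \<Rightarrow> ('k \<Rightarrow> nat)" where
  "hist xs = (\<lambda>\<kappa>. card {i. i < length xs \<and> xs ! i = \<kappa>})"

definition histograms :: "nat \<Rightarrow> (('k::finite) \<Rightarrow> nat) set" where
  "histograms n = hist ` datasets n"

definition num_with_hist :: "nat \<Rightarrow> (('k::finite) \<Rightarrow> nat) \<Rightarrow> nat" where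
  "num_with_hist n z = card {x \<in> datasets n. hist x = z}"

definition cascade :: "'b set \<Rightarrow> ('a \<Rightarrow> 'b \<Rightarrow> real) \<Rightarrow> ('b \<Rightarrow> 'c \<Rightarrow> real) \<Rightarrow> 'a \<Rightarrow> 'c \<Rightarrow> real" where
  "cascade B C D = (\<lambda>x z. \<Sum>y\<in>B. C x y * D y z)"

definition krr_q :: "real \<Rightarrow> ('k::finite) \<Rightarrow> 'k \<Rightarrow> real" where
  "krr_q p b a = (if b = a then p else (1 - p) / (real (card (UNIV :: 'k set)) - 1))"

definition krr_N :: "real \<Rightarrow> nat \<Rightarrow> ('k::finite) list \<Rightarrow> 'k list \<Rightarrow> real" where
  "krr_N p n x y = (\<Prod>i<n. krr_q p (y ! i) (x ! i))"

definition shuffle_S :: "nat \<Rightarrow> ('k::finite) list \<Rightarrow> 'k list \<Rightarrow> real" where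
  "shuffle_S n x y = (if hist y = hist x then 1 / real (num_with_hist n (hist x)) else 0)"

definition shuffle_Sr :: "('k::finite) list \<Rightarrow> ('k \<Rightarrow> nat) \<Rightarrow> real" where
  "shuffle_Sr x z = (if hist x = z then 1 else 0)"

definition krr_Nr :: "real \<Rightarrow> nat \<Rightarrow> (('k::finite) \<Rightarrow> nat) \<Rightarrow> ('k \<Rightarrow> nat) \<Rightarrow> real" where
  "krr_Nr p n z' z = 1 / real (num_with_hist n z') *
     (\<Sum>x'\<in>{x' \<in> datasets n. hist x' = z'}. \<Sum>y\<in>{y \<in> datasets n. hist y = z}. krr_N p n x' y)"

definition post_vuln :: "'a set \<Rightarrow> 'b set \<Rightarrow> nat set \<Rightarrow> ('a \<Rightarrow> real) \<Rightarrow> (nat \<Rightarrow> 'a \<Rightarrow> real)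
    \<Rightarrow> ('a \<Rightarrow> 'b \<Rightarrow> real) \<Rightarrow> real" where
  "post_vuln X Y W \<pi> g C = (\<Sum>y\<in>Y. Max ((\<lambda>w. \<Sum>x\<in>X. \<pi> x * C x y * g w x) ` W))"

text \<open>Equivalence of channels with common input set X: equal posterior vulnerability for
all priors (probability distributions on X) and all gain functions g : W \<times> X \<rightarrow> [0,\<infinity>),
W finite nonempty (represented, without loss of generality, as a subset of nat).\<close>
definition chan_equiv :: "'a set \<Rightarrow> 'b set \<Rightarrow> ('a \<Rightarrow> 'b \<Rightarrow> real) \<Rightarrow> 'c set \<Rightarrow> ('a \<Rightarrow> 'c \<Rightarrow> real) \<Rightarrow> bool" where
  "chan_equiv X Y1 C1 Y2 C2 \<longleftrightarrow>
     (\<forall>W \<pi> g. finite W \<and> W \<noteq> {} \<and> (\<forall>x\<in>X. 0 \<le> \<pi> x) \<and> (\<Sum>x\<in>X. \<pi> x) = 1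
        \<and> (\<forall>w\<in>W. \<forall>x\<in>X. 0 \<le> g w x)
        \<longrightarrow> post_vuln X Y1 W \<pi> g C1 = post_vuln X Y2 W \<pi> g C2)"

end

theory Submission
  imports Defs "HOL-Combinatorics.Permutations"
begin

lemma hist_mset: "hist xs = count (mset xs)"
  by (rule ext) (auto simp: hist_def count_mset count_list_eq_length_filter length_filter_conv_card eq_commute)

lemma hist_eq_iff: "hist x = hist y \<longleftrightarrow> mset x = mset y"
  by (simp add: hist_mset count_inject)

lemma fin_D: "finite (datasets n :: ('k::finite) list set)"
proof -
  have "datasets n = {xs :: 'k list. set xs \<subseteq> UNIV \<and> length xs = n}"
    by (auto simp: datasets_def)
  then show ?thesis using finite_lists_length_eq[of "UNIV :: 'k set" n] by simp
qed

lemma N_perm: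
  assumes "\<tau> permutes {..<n}" "length a = n" "length b = n"
  shows "krr_N p n (permute_list \<tau> a) (permute_list \<tau> b) = krr_N p n a b"
proof -
  have "krr_N p n (permute_list \<tau> a) (permute_list \<tau> b) = (\<Prod>i<n. krr_q p (b ! \<tau> i) (a ! \<tau> i))"
    unfolding krr_N_def using assms by (intro prod.cong) (auto simp: permute_list_nth)
  also have "\<dots> = (\<Prod>i<n. krr_q p (b ! i) (a ! i))"
    using prod.permute[OF assms(1), of "\<lambda>i. krr_q p (b ! i) (a ! i)"] by (simp add: o_def)
  finally show ?thesis by (simp add: krr_N_def)
qed

lemma sum_N_inv:
  fixes y y' :: "('k::finite) list"
  assumes "length y = n" "length y' = n" "hist y = hist y'"
  shows "(\<Sum>x'\<in>{x\<in>datasets n. hist x = c}. krr_N p n x' y) = (\<Sum>x'\<in>{x\<in>datasets n. hist x = c}. krr_N p n x' y')"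
proof -
  from assms(3) have "mset y = mset y'" by (simp add: hist_eq_iff)
  then obtain \<tau> where tau: "\<tau> permutes {..<length y'}" "permute_list \<tau> y' = y"
    by (rule mset_eq_permutation)
  have tau': "\<tau> permutes {..<n}" using tau assms by simp
  have itau: "inv \<tau> permutes {..<n}" using tau' by (rule permutes_inv)
  let ?S = "{x\<in>datasets n. hist x = c}"
  have inv1: "permute_list (inv \<tau>) (permute_list \<tau> a) = a" if "length a = n" for a :: "'k list"
    using permute_list_compose[of "inv \<tau>" a \<tau>] itau that permutes_inv_o(1)[OF tau'] by simp
  have inv2: "permute_list \<tau> (permute_list (inv \<tau>) b) = b" if "length b = n" for b :: "'k list"
    using permute_list_compose[of \<tau> b "inv \<tau>"] tau' that permutes_inv_o(2)[OF tau'] by simp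
  show ?thesis
  proof (rule sum.reindex_bij_witness[where j = "permute_list (inv \<tau>)" and i = "permute_list \<tau>"])
    fix a assume a: "a \<in> ?S"
    then have la: "length a = n" by (simp add: datasets_def)
    show "permute_list \<tau> (permute_list (inv \<tau>) a) = a" using inv2 la .
    show "permute_list (inv \<tau>) a \<in> ?S" using a la itau mset_permute_list[of "inv \<tau>" a]
      by (simp add: datasets_def hist_mset)
    have "krr_N p n (permute_list (inv \<tau>) a) y' = krr_N p n (permute_list \<tau> (permute_list (inv \<tau>) a)) (permute_list \<tau> y')"
      using N_perm[OF tau' _ assms(2), of "permute_list (inv \<tau>) a" p] la by simp
    then show "krr_N p n (permute_list (inv \<tau>) a) y' = krr_N p n a y"
      using inv2[OF la] tau(2) by simp
  next
    fix b assume b: "b \<in> ?S"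
    then have lb: "length b = n" by (simp add: datasets_def)
    show "permute_list (inv \<tau>) (permute_list \<tau> b) = b" using inv1 lb .
    show "permute_list \<tau> b \<in> ?S" using b lb tau' mset_permute_list[of \<tau> b]
      by (simp add: datasets_def hist_mset)
  qed
qed


lemma C1_eq:
  fixes x y :: "('k::finite) list"
  assumes "x \<in> datasets n"
  shows "cascade (datasets n) (shuffle_S n) (krr_N p n) x y
     = 1 / real (num_with_hist n (hist x)) * (\<Sum>x'\<in>{x'\<in>datasets n. hist x' = hist x}. krr_N p n x' y)"
proof -
  have "cascade (datasets n) (shuffle_S n) (krr_N p n) x y
      = (\<Sum>x'\<in>datasets n. if hist x' = hist x then 1 / real (num_with_hist n (hist x)) * krr_N p n x' y else 0)"
    unfolding cascade_def shuffle_S_def by (intro sum.cong) auto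
  also have "\<dots> = (\<Sum>x'\<in>{x'\<in>datasets n. hist x' = hist x}. 1 / real (num_with_hist n (hist x)) * krr_N p n x' y)"
    by (rule sum.inter_filter[OF fin_D, symmetric])
  finally show ?thesis by (simp add: sum_distrib_left)
qed

lemma C1_inv:
  fixes x y y' :: "('k::finite) list"
  assumes "x \<in> datasets n" "y \<in> datasets n" "y' \<in> datasets n" "hist y = hist y'"
  shows "cascade (datasets n) (shuffle_S n) (krr_N p n) x y = cascade (datasets n) (shuffle_S n) (krr_N p n) x y'"
  unfolding C1_eq[OF assms(1)]
  using assms sum_N_inv[where y=y and y'=y' and n=n and c="hist x" and p=p] by (simp add: datasets_def)

lemma C2_eq:
  fixes x :: "('k::finite) list"
  assumes "x \<in> datasets n"
  shows "cascade (histograms n) shuffle_Sr (krr_Nr p n) x z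
     = (\<Sum>y\<in>{y\<in>datasets n. hist y = z}. cascade (datasets n) (shuffle_S n) (krr_N p n) x y)"
proof -
  have fH: "finite (histograms n :: ('k \<Rightarrow> nat) set)" unfolding histograms_def by (intro finite_imageI fin_D)
  have hx: "hist x \<in> histograms n" using assms by (simp add: histograms_def)
  have "cascade (histograms n) shuffle_Sr (krr_Nr p n) x z
      = (\<Sum>z'\<in>histograms n. if hist x = z' then krr_Nr p n z' z else 0)"
    unfolding cascade_def shuffle_Sr_def by (intro sum.cong) auto
  also have "\<dots> = krr_Nr p n (hist x) z" using fH hx by simp
  also have "\<dots> = (\<Sum>y\<in>{y\<in>datasets n. hist y = z}. cascade (datasets n) (shuffle_S n) (krr_N p n) x y)"
    unfolding krr_Nr_def C1_eq[OF assms] sum_distrib_left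
    by (rule sum.swap)
  finally show ?thesis .
qed

lemma Max_scale:
  fixes f :: "nat \<Rightarrow> real"
  assumes "finite W" "W \<noteq> {}" "c \<ge> 0"
  shows "Max ((\<lambda>w. c * f w) ` W) = c * Max (f ` W)"
proof -
  have "mono ((*) c)" using assms(3) by (auto simp: mono_def mult_left_mono)
  from mono_Max_commute[OF this, of "f ` W"] assms show ?thesis by (simp add: image_image)
qed

theorem mainTheorem5:
  fixes n :: nat and \<epsilon> p :: real
  assumes "n \<ge> 1" and "card (UNIV :: 'k::finite set) \<ge> 2" and "\<epsilon> \<ge> 0"
    and "p = exp \<epsilon> / (real (card (UNIV :: 'k set)) - 1 + exp \<epsilon>)"
  shows "chan_equiv (datasets n :: 'k list set)
           (datasets n) (cascade (datasets n) (shuffle_S n) (krr_N p n))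
           (histograms n) (cascade (histograms n) shuffle_Sr (krr_Nr p n))"
  unfolding chan_equiv_def
proof (intro allI impI, elim conjE)
  fix W :: "nat set" and \<pi> :: "'k list \<Rightarrow> real" and g :: "nat \<Rightarrow> 'k list \<Rightarrow> real"
  assume W: "finite W" "W \<noteq> {}"
  let ?D = "datasets n :: 'k list set"
  let ?H = "histograms n :: ('k \<Rightarrow> nat) set"
  let ?C1 = "cascade ?D (shuffle_S n) (krr_N p n)"
  let ?C2 = "cascade ?H shuffle_Sr (krr_Nr p n)"
  define M where "M y = Max ((\<lambda>w. \<Sum>x\<in>?D. \<pi> x * ?C1 x y * g w x) ` W)" for y
  have fH: "finite ?H" unfolding histograms_def by (intro finite_imageI fin_D)
  have "post_vuln ?D ?D W \<pi> g ?C1 = (\<Sum>y\<in>?D. M y)" by (simp add: post_vuln_def M_def)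
  also have "\<dots> = (\<Sum>z\<in>?H. \<Sum>y\<in>{y\<in>?D. hist y = z}. M y)"
    by (rule sum.group[OF fin_D fH, symmetric]) (auto simp: histograms_def)
  also have "\<dots> = (\<Sum>z\<in>?H. Max ((\<lambda>w. \<Sum>x\<in>?D. \<pi> x * ?C2 x z * g w x) ` W))"
  proof (rule sum.cong[OF refl])
    fix z assume "z \<in> ?H"
    then obtain y0 where y0: "y0 \<in> ?D" "hist y0 = z" by (auto simp: histograms_def)
    define c where "c = real (card {y\<in>?D. hist y = z})"
    have Mc: "M y = M y0" if "y \<in> {y\<in>?D. hist y = z}" for y
    proof -
      have "?C1 x y = ?C1 x y0" if "x \<in> ?D" for x
        using C1_inv[OF that _ y0(1), of y p] \<open>y \<in> {y\<in>?D. hist y = z}\<close> y0(2) by simp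
      then show ?thesis unfolding M_def
        by (intro arg_cong[where f = Max] image_cong refl sum.cong) auto
    qed
    have C2c: "?C2 x z = c * ?C1 x y0" if "x \<in> ?D" for x
    proof -
      have "?C2 x z = (\<Sum>y\<in>{y\<in>?D. hist y = z}. ?C1 x y0)"
        unfolding C2_eq[OF that]
        by (rule sum.cong[OF refl]) (rule C1_inv[OF that _ y0(1)], auto simp: y0(2))
      then show ?thesis by (simp add: c_def)
    qed
    have "(\<Sum>y\<in>{y\<in>?D. hist y = z}. M y) = (\<Sum>y\<in>{y\<in>?D. hist y = z}. M y0)"
      by (rule sum.cong[OF refl]) (rule Mc)
    also have "\<dots> = c * M y0"
      by (simp add: c_def)
    also have "\<dots> = Max ((\<lambda>w. c * (\<Sum>x\<in>?D. \<pi> x * ?C1 x y0 * g w x)) ` W)"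
      unfolding M_def by (rule Max_scale[OF W, symmetric]) (simp add: c_def)
    also have "\<dots> = Max ((\<lambda>w. \<Sum>x\<in>?D. \<pi> x * ?C2 x z * g w x) ` W)"
    proof -
      have "c * (\<Sum>x\<in>?D. \<pi> x * ?C1 x y0 * g w x) = (\<Sum>x\<in>?D. \<pi> x * ?C2 x z * g w x)" for w
        unfolding sum_distrib_left
        by (rule sum.cong[OF refl]) (simp add: C2c)
      then show ?thesis by simp
    qed
    finally show "(\<Sum>y\<in>{y\<in>?D. hist y = z}. M y) = Max ((\<lambda>w. \<Sum>x\<in>?D. \<pi> x * ?C2 x z * g w x) ` W)" .
  qed
  also have "\<dots> = post_vuln ?D ?H W \<pi> g ?C2" by (simp add: post_vuln_def)
  finally show "post_vuln ?D ?D W \<pi> g ?C1 = post_vuln ?D ?H W \<pi> g ?C2" .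
qed

end
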